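(* Let $\mathcal{C}_1$ and $\mathcal{C}_2$ be binary linear codes with parameters $(n_1,k_1,d_1)$ and $(n_2,k_2,d_2)$, respectively. Then $\mathcal{C}_3 = \{(u,v) : u \in \mathcal{C}_1,\ v\in \mathcal{C}_2\}$ is an $(n_1+n_2,\,k_1+k_2,\,\min\{d_1,d_2\})$ code with $$\rho(\mathcal{C}_3) \le \rho(\mathcal{C}_1) + \rho(\mathcal{C}_2).$$
   Context: An $(n,k,d)$ code is a linear code of length $n$, dimension $k$ and minimum Hamming distance $d$. A parity-check matrix for a linear code $\mathcal{C}$ is any matrix (possibly with linearly dependent rows) whose rows span $\mathcal{C}^\perp$. For a parity-check matrix $H$, the stopping distance $s(H)$ is the largest integer such that for every set of $s(H)-1$ or fewer columns of $H$, the projection of $H$ onto those columns contains at least one row of Hamming weight exactly one. The stopping redundancy $\rho(\mathcal{C})$ is the smallest number of rows of a parity-check matrix $H$ for $\mathcal{C}$ with $s(H) = d(\mathcal{C})$, the minimum distance of $\mathcal{C}$. *)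

theory Defs
  imports Main
begin

text \<open>Binary vectors of length n are boolean lists of length n
 (True = 1, False = 0). Addition over GF(2) is componentwise xor.\<close>

definition vec_add :: "bool list \<Rightarrow> bool list \<Rightarrow> bool list" where
  "vec_add u v = map2 (\<noteq>) u v"

definition zero_vec :: "nat \<Rightarrow> bool list" where
  "zero_vec n = replicate n False"

definition weight :: "bool list \<Rightarrow> nat" where
  "weight u = card {i. i < length u \<and> u ! i}"

definition inner_gf2 :: "bool list \<Rightarrow> bool list \<Rightarrow> bool" where
  "inner_gf2 u v = odd (card {i. i < length u \<and> u ! i \<and> v ! i})"

definition linear_code :: "nat \<Rightarrow> bool list set \<Rightarrow> bool" where
  "linear_code n C \<longleftrightarrow> C \<subseteq> {u. length u = n} \<and> zero_vec n \<in> C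
     \<and> (\<forall>u\<in>C. \<forall>v\<in>C. vec_add u v \<in> C)"

definition dual_code :: "nat \<Rightarrow> bool list set \<Rightarrow> bool list set" where
  "dual_code n C = {v. length v = n \<and> (\<forall>u\<in>C. \<not> inner_gf2 u v)}"

inductive_set row_span :: "nat \<Rightarrow> bool list list \<Rightarrow> bool list set"
  for n :: nat and H :: "bool list list" where
  zero: "zero_vec n \<in> row_span n H"
| add: "r \<in> set H \<Longrightarrow> v \<in> row_span n H \<Longrightarrow> vec_add r v \<in> row_span n H"

text \<open>Minimum distance of a linear code = minimum weight of a nonzero codeword.\<close>
definition min_dist :: "bool list set \<Rightarrow> nat" where
  "min_dist C = Min {weight u | u. u \<in> C \<and> True \<in> set u}"

text \<open>An (n,k,d) binary linear code (with d its minimum distance, so the code is nonzero).\<close>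
definition is_code :: "nat \<Rightarrow> nat \<Rightarrow> nat \<Rightarrow> bool list set \<Rightarrow> bool" where
  "is_code n k d C \<longleftrightarrow> linear_code n C \<and> card C = 2 ^ k
     \<and> (\<exists>u\<in>C. True \<in> set u) \<and> d = min_dist C"

text \<open>A parity-check matrix (rows possibly dependent) whose rows span the dual code.\<close>
definition parity_check :: "nat \<Rightarrow> bool list set \<Rightarrow> bool list list \<Rightarrow> bool" where
  "parity_check n C H \<longleftrightarrow> (\<forall>h\<in>set H. length h = n) \<and> row_span n H = dual_code n C"

definition stopping_ok :: "nat \<Rightarrow> bool list list \<Rightarrow> nat \<Rightarrow> bool" where
  "stopping_ok n H s \<longleftrightarrow> (\<forall>S. S \<subseteq> {..<n} \<and> S \<noteq> {} \<and> card S < s \<longrightarrow>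
       (\<exists>h\<in>set H. card {i\<in>S. h ! i} = 1))"

definition stopping_distance :: "nat \<Rightarrow> bool list list \<Rightarrow> nat" where
  "stopping_distance n H = (GREATEST s. stopping_ok n H s)"

definition stopping_redundancy :: "nat \<Rightarrow> bool list set \<Rightarrow> nat" where
  "stopping_redundancy n C = (LEAST m. \<exists>H. length H = m \<and> parity_check n C H
      \<and> stopping_distance n H = min_dist C)"

end

theory Submission
  imports Defs
begin


fun ip :: "bool list \<Rightarrow> bool list \<Rightarrow> bool" where
  "ip (a#u) (b#v) = ((a \<and> b) \<noteq> ip u v)"
| "ip _ _ = False"

lemma ip_filter: "ip u v = odd (length (filter (\<lambda>(a,b). a \<and> b) (zip u v)))"
  by (induction u v rule: ip.induct) auto

lemma inner_ip: "length u = length v \<Longrightarrow> inner_gf2 u v = ip u v"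
proof -
  assume l: "length u = length v"
  have "{i. i < length u \<and> u ! i \<and> v ! i} = {i. i < length (zip u v) \<and> (\<lambda>(a,b). a \<and> b) (zip u v ! i)}"
    using l by auto
  then show ?thesis unfolding inner_gf2_def ip_filter length_filter_conv_card by simp
qed

lemma len_vec_add[simp]: "length (vec_add u v) = min (length u) (length v)"
  by (simp add: vec_add_def)

lemma vec_add_Cons[simp]: "vec_add (a#u) (b#v) = (a \<noteq> b) # vec_add u v"
  by (simp add: vec_add_def)

lemma zero_vec_Suc: "zero_vec (Suc n) = False # zero_vec n"
  by (simp add: zero_vec_def)

lemma len_zero[simp]: "length (zero_vec n) = n" by (simp add: zero_vec_def)

lemma ip_add1: "length a = length c \<Longrightarrow> length b = length c \<Longrightarrow> ip (vec_add a b) c = (ip a c \<noteq> ip b c)"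
proof (induction a arbitrary: b c)
  case Nil then show ?case by (simp add: vec_add_def)
next
  case (Cons x a) then show ?case by (cases b; cases c) auto
qed

lemma ip_add2: "length a = length c \<Longrightarrow> length b = length c \<Longrightarrow> ip c (vec_add a b) = (ip c a \<noteq> ip c b)"
proof (induction a arbitrary: b c)
  case Nil then show ?case by (simp add: vec_add_def)
next
  case (Cons x a) then show ?case by (cases b; cases c) auto
qed

lemma ip_sym: "ip u v = ip v u"
  by (induction u v rule: ip.induct) auto

lemma ip_zero[simp]: "ip u (zero_vec n) = False"
  by (induction u arbitrary: n) (auto simp: zero_vec_def, case_tac n, auto)

lemma ip_zero2[simp]: "ip (zero_vec n) u = False"
  using ip_zero ip_sym by metis

lemma vec_add_inv: "length a = length b \<Longrightarrow> vec_add a (vec_add b a) = b"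
proof (induction a arbitrary: b)
  case Nil then show ?case by (simp add: vec_add_def)
next
  case (Cons x a) then show ?case by (cases b) auto
qed

lemma ip_append: "length u = length a \<Longrightarrow> ip (u @ w) (a @ b) = (ip u a \<noteq> ip w b)"
proof (induction u arbitrary: a)
  case Nil then show ?case by simp
next
  case (Cons x u) then show ?case by (cases a) auto
qed

lemma vec_add_append: "length u = length a \<Longrightarrow> vec_add (u @ w) (a @ b) = vec_add u a @ vec_add w b"
  by (simp add: vec_add_def)

lemma zero_append: "zero_vec (m + n) = zero_vec m @ zero_vec n"
  by (simp add: zero_vec_def replicate_add)

lemma vec_add_zero: "length a = n \<Longrightarrow> vec_add (zero_vec n) a = a"
  by (induction a arbitrary: n) (auto simp: zero_vec_def vec_add_def)

lemma vec_add_zero2: "length a = n \<Longrightarrow> vec_add a (zero_vec n) = a"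
  by (induction a arbitrary: n) (auto simp: zero_vec_def vec_add_def)

lemma weight_filter: "weight u = length (filter id u)"
  by (simp add: weight_def length_filter_conv_card)

lemma weight_append: "weight (u @ v) = weight u + weight v"
  by (simp add: weight_filter)

lemma weight_zero[simp]: "weight (zero_vec n) = 0"
  by (simp add: weight_filter zero_vec_def)

lemma nonzero_iff: "(True \<in> set u) = (u \<noteq> zero_vec (length u))"
  by (induction u) (auto simp: zero_vec_def)



lemma sep:
  "C \<subseteq> {u. length u = n} \<Longrightarrow> zero_vec n \<in> C \<Longrightarrow> (\<forall>u\<in>C. \<forall>v\<in>C. vec_add u v \<in> C)
   \<Longrightarrow> length x = n \<Longrightarrow> x \<notin> C \<Longrightarrow> \<exists>v. length v = n \<and> (\<forall>u\<in>C. \<not> ip u v) \<and> ip x v"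
proof (induction n arbitrary: C x)
  case 0
  then show ?case by (simp add: zero_vec_def)
next
  case (Suc n)
  define C0 where "C0 = {u. False # u \<in> C}"
  have C0l: "C0 \<subseteq> {u. length u = n}" using Suc.prems(1) by (auto simp: C0_def)
  have C0z: "zero_vec n \<in> C0" using Suc.prems(2) by (simp add: C0_def zero_vec_Suc)
  have C0a: "\<forall>u\<in>C0. \<forall>v\<in>C0. vec_add u v \<in> C0"
  proof (intro ballI)
    fix u v assume "u \<in> C0" "v \<in> C0"
    then have "vec_add (False # u) (False # v) \<in> C" using Suc.prems(3) unfolding C0_def by blast
    then show "vec_add u v \<in> C0" by (simp add: C0_def)
  qed
  obtain b x' where x: "x = b # x'" using Suc.prems(4) by (cases x) auto
  have lx': "length x' = n" using x Suc.prems(4) by simp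
  have Cform: "\<And>u. u \<in> C \<Longrightarrow> \<exists>a u'. u = a # u' \<and> length u' = n"
  proof -
    fix u assume "u \<in> C"
    then have "length u = Suc n" using Suc.prems(1) by auto
    then show "\<exists>a u'. u = a # u' \<and> length u' = n" by (cases u) auto
  qed
  show ?case
  proof (cases "\<exists>w. True # w \<in> C")
    case True
    then obtain w where w: "True # w \<in> C" by blast
    have lw: "length w = n" using w Suc.prems(1) by auto
    have key: "\<And>v'. length v' = n \<Longrightarrow> \<forall>u\<in>C0. \<not> ip u v' \<Longrightarrow> \<forall>u\<in>C. \<not> ip u (ip w v' # v')"
    proof
      fix v' u assume lv: "length v' = n" and o: "\<forall>u\<in>C0. \<not> ip u v'" and u: "u \<in> C"
      obtain a u' where u': "u = a # u'" "length u' = n" using Cform[OF u] by blast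
      show "\<not> ip u (ip w v' # v')"
      proof (cases a)
        case True
        have "vec_add (True # w) u \<in> C" using Suc.prems(3) w u by blast
        then have "vec_add w u' \<in> C0" using u' True by (simp add: C0_def)
        then have "\<not> ip (vec_add w u') v'" using o by blast
        then show ?thesis using ip_add1[of w v' u'] lw lv u' True by simp
      next
        case False
        then show ?thesis using u u' o by (simp add: C0_def)
      qed
    qed
    show ?thesis
    proof (cases b)
      case False
      then have "x' \<notin> C0" using Suc.prems(5) x by (simp add: C0_def)
      from Suc.IH[OF C0l C0z C0a lx' this] obtain v' where v': "length v' = n" "\<forall>u\<in>C0. \<not> ip u v'" "ip x' v'" by blast
      show ?thesis using key[OF v'(1,2)] v' x False by (intro exI[of _ "ip w v' # v'"]) auto
    next
      case True
      have nc: "vec_add x' w \<notin> C0"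
      proof
        assume "vec_add x' w \<in> C0"
        then have "False # vec_add x' w \<in> C" by (simp add: C0_def)
        then have "vec_add (True # w) (False # vec_add x' w) \<in> C" using Suc.prems(3) w by blast
        then have "True # x' \<in> C" using vec_add_inv[of w x'] lw lx' by simp
        then show False using Suc.prems(5) x True by simp
      qed
      have lxw: "length (vec_add x' w) = n" using lx' lw by simp
      from Suc.IH[OF C0l C0z C0a lxw nc] obtain v' where v': "length v' = n" "\<forall>u\<in>C0. \<not> ip u v'" "ip (vec_add x' w) v'" by blast
      have "ip x (ip w v' # v')" using v'(3) ip_add1[of x' v' w] lx' lw v'(1) x True by auto
      then show ?thesis using key[OF v'(1,2)] v' by (intro exI[of _ "ip w v' # v'"]) auto
    qed
  next
    case False
    show ?thesis
    proof (cases b)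
      case True
      show ?thesis
      proof (intro exI[of _ "True # zero_vec n"] conjI ballI)
        fix u assume u: "u \<in> C"
        obtain a u' where u': "u = a # u'" "length u' = n" using Cform[OF u] by blast
        then show "\<not> ip u (True # zero_vec n)" using False u by (cases a) auto
      qed (use x True in auto)
    next
      case bF: False
      then have "x' \<notin> C0" using Suc.prems(5) x by (simp add: C0_def)
      from Suc.IH[OF C0l C0z C0a lx' this] obtain v' where v': "length v' = n" "\<forall>u\<in>C0. \<not> ip u v'" "ip x' v'" by blast
      show ?thesis
      proof (intro exI[of _ "False # v'"] conjI ballI)
        fix u assume u: "u \<in> C"
        obtain a u' where u': "u = a # u'" "length u' = n" using Cform[OF u] by blast
        then show "\<not> ip u (False # v')" using False u v'(2) by (cases a) (auto simp: C0_def)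
      qed (use x bF v' in auto)
    qed
  qed
qed



lemma finite_len: "finite {u::bool list. length u = n}"
proof -
  have "{u::bool list. length u = n} \<subseteq> {xs. set xs \<subseteq> UNIV \<and> length xs \<le> n}" by auto
  then show ?thesis using finite_lists_length_le[of "UNIV::bool set" n] finite_subset by auto
qed

lemma min_dist_props:
  assumes "C \<subseteq> {u. length u = n}" "\<exists>u\<in>C. True \<in> set u"
  shows "(\<exists>c\<in>C. True \<in> set c \<and> weight c = min_dist C) \<and> (\<forall>c\<in>C. True \<in> set c \<longrightarrow> min_dist C \<le> weight c)"
proof -
  let ?W = "{weight u | u. u \<in> C \<and> True \<in> set u}"
  have fC: "finite C" using assms(1) finite_len finite_subset by blast
  have fW: "finite ?W" using fC by simp
  have ne: "?W \<noteq> {}" using assms(2) by blast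
  have "min_dist C \<in> ?W" unfolding min_dist_def using Min_in[OF fW ne] .
  moreover have "\<forall>c\<in>C. True \<in> set c \<longrightarrow> min_dist C \<le> weight c"
    unfolding min_dist_def using Min_le[OF fW] by blast
  ultimately show ?thesis by auto
qed

lemma min_dist_eqI:
  assumes "C \<subseteq> {u. length u = n}" "c \<in> C" "True \<in> set c" "weight c = d"
    "\<forall>c\<in>C. True \<in> set c \<longrightarrow> d \<le> weight c"
  shows "min_dist C = d"
proof -
  let ?W = "{weight u | u. u \<in> C \<and> True \<in> set u}"
  have fC: "finite C" using assms(1) finite_len finite_subset by blast
  have fW: "finite ?W" using fC by simp
  have "d \<in> ?W" using assms by blast
  then show ?thesis unfolding min_dist_def using assms(5)
    by (intro Min_eqI[OF fW]) auto
qed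

lemma row_span_len0: "v \<in> row_span n H \<Longrightarrow> (\<forall>h\<in>set H. length h = n) \<Longrightarrow> length v = n"
  by (induction rule: row_span.induct) auto

lemma row_span_len: "(\<forall>h\<in>set H. length h = n) \<Longrightarrow> v \<in> row_span n H \<Longrightarrow> length v = n"
  using row_span_len0 by blast

lemma dual_zero: "linear_code n C \<Longrightarrow> zero_vec n \<in> dual_code n C"
  unfolding dual_code_def linear_code_def by (auto simp: inner_ip subset_iff)

lemma dual_add: "linear_code n C \<Longrightarrow> a \<in> dual_code n C \<Longrightarrow> b \<in> dual_code n C \<Longrightarrow> vec_add a b \<in> dual_code n C"
  unfolding dual_code_def linear_code_def
  by (auto simp: inner_ip ip_add2 subset_iff)

lemma dual_inner: "linear_code n C \<Longrightarrow> u \<in> C \<Longrightarrow> v \<in> dual_code n C \<Longrightarrow> \<not> ip u v"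
  unfolding dual_code_def linear_code_def by (auto simp: inner_ip subset_iff)

lemma span_sub_dual: "parity_check n C H \<Longrightarrow> h \<in> set H \<Longrightarrow> h \<in> dual_code n C"
  unfolding parity_check_def using row_span.add[OF _ row_span.zero, of h H n]
  by (auto simp: vec_add_zero2)

lemma stopping_mono: "stopping_ok n H s \<Longrightarrow> t \<le> s \<Longrightarrow> stopping_ok n H t"
  unfolding stopping_ok_def by auto

lemma not_stopping:
  assumes "parity_check n C H" "linear_code n C" "\<exists>u\<in>C. True \<in> set u"
  shows "\<not> stopping_ok n H (Suc (min_dist C))"
proof
  assume st: "stopping_ok n H (Suc (min_dist C))"
  have Cl: "C \<subseteq> {u. length u = n}" using assms(2) by (simp add: linear_code_def)
  obtain c where c: "c \<in> C" "True \<in> set c" "weight c = min_dist C"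
    using min_dist_props[OF Cl assms(3)] by blast
  have lc: "length c = n" using c Cl by auto
  let ?S = "{i. i < n \<and> c ! i}"
  have "?S \<subseteq> {..<n}" by auto
  moreover have "?S \<noteq> {}" using c(2) lc by (auto simp: in_set_conv_nth)
  moreover have "card ?S < Suc (min_dist C)" using c(3) lc by (simp add: weight_def)
  ultimately obtain h where h: "h \<in> set H" "card {i\<in>?S. h ! i} = 1"
    using st unfolding stopping_ok_def by blast
  have hd: "h \<in> dual_code n C" using span_sub_dual[OF assms(1) h(1)] .
  then have "\<not> inner_gf2 c h" unfolding dual_code_def using c by blast
  moreover have "{i\<in>?S. h ! i} = {i. i < length c \<and> c ! i \<and> h ! i}" using lc by auto
  ultimately show False using h(2) unfolding inner_gf2_def by simp
qed

lemma stopping_bound: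
  assumes "parity_check n C H" "linear_code n C" "\<exists>u\<in>C. True \<in> set u" "stopping_ok n H s"
  shows "s \<le> min_dist C"
proof (rule ccontr)
  assume "\<not> s \<le> min_dist C"
  then have "Suc (min_dist C) \<le> s" by simp
  then show False using stopping_mono[OF assms(4)] not_stopping[OF assms(1-3)] by blast
qed

lemma sd_eq:
  assumes "parity_check n C H" "linear_code n C" "\<exists>u\<in>C. True \<in> set u" "stopping_ok n H (min_dist C)"
  shows "stopping_distance n H = min_dist C"
  unfolding stopping_distance_def
  by (rule Greatest_equality[where P="stopping_ok n H", OF assms(4)]) (use stopping_bound[OF assms(1-3)] in auto)

lemma sd_ok:
  assumes "parity_check n C H" "linear_code n C" "\<exists>u\<in>C. True \<in> set u"
  shows "stopping_ok n H (stopping_distance n H)"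
  unfolding stopping_distance_def
proof (rule GreatestI_nat)
  show "stopping_ok n H 0" by (simp add: stopping_ok_def)
  show "\<And>y. stopping_ok n H y \<Longrightarrow> y \<le> min_dist C" using stopping_bound[OF assms] by blast
qed



definition restr :: "nat set \<Rightarrow> bool list \<Rightarrow> bool list" where
  "restr S v = map (\<lambda>i. v ! i \<and> i \<in> S) [0..<length v]"

lemma restr_len[simp]: "length (restr S v) = length v" by (simp add: restr_def)
lemma restr_nth[simp]: "i < length v \<Longrightarrow> restr S v ! i = (v ! i \<and> i \<in> S)" by (simp add: restr_def)

lemma restr_add: "length a = length b \<Longrightarrow> restr S (vec_add a b) = vec_add (restr S a) (restr S b)"
  by (rule nth_equalityI) (auto simp: vec_add_def)

lemma restr_zero: "restr S (zero_vec n) = zero_vec n"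
  by (rule nth_equalityI) (auto simp: zero_vec_def)

lemma ip_restr: "length a = length b \<Longrightarrow> ip (restr S a) b = ip a (restr S b)"
proof -
  assume l: "length a = length b"
  have "{i. i < length (restr S a) \<and> restr S a ! i \<and> b ! i} = {i. i < length a \<and> a ! i \<and> restr S b ! i}"
    using l by auto
  then have "inner_gf2 (restr S a) b = inner_gf2 a (restr S b)" unfolding inner_gf2_def by simp
  then show ?thesis using l by (simp add: inner_ip)
qed

lemma stop_full:
  assumes lin: "linear_code n C" and S: "S \<subseteq> {..<n}" "j \<in> S" "card S < min_dist C"
  shows "\<exists>v\<in>dual_code n C. {i\<in>S. v ! i} = {j}"
proof (rule ccontr)
  assume nex: "\<not> ?thesis"
  have Cl: "C \<subseteq> {u. length u = n}" and Cz: "zero_vec n \<in> C" and Ca: "\<forall>u\<in>C. \<forall>v\<in>C. vec_add u v \<in> C"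
    using lin by (auto simp: linear_code_def)
  have fS: "finite S" using S(1) finite_subset by blast
  have jn: "j < n" using S by auto
  define W where "W = restr S ` dual_code n C"
  have Wl: "W \<subseteq> {u. length u = n}" by (auto simp: W_def dual_code_def)
  have Wz: "zero_vec n \<in> W" unfolding W_def using dual_zero[OF lin] restr_zero by (metis image_eqI)
  have Wa: "\<forall>u\<in>W. \<forall>v\<in>W. vec_add u v \<in> W"
  proof (intro ballI)
    fix u v assume "u \<in> W" "v \<in> W"
    then obtain a b where ab: "a \<in> dual_code n C" "b \<in> dual_code n C" "u = restr S a" "v = restr S b"
      by (auto simp: W_def)
    have "length a = length b" using ab by (auto simp: dual_code_def)
    then have "vec_add u v = restr S (vec_add a b)" using ab restr_add by simp
    then show "vec_add u v \<in> W" using dual_add[OF lin ab(1,2)] by (simp add: W_def)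
  qed
  define e where "e = map (\<lambda>i. i = j) [0..<n]"
  have le: "length e = n" by (simp add: e_def)
  have eW: "e \<notin> W"
  proof
    assume "e \<in> W"
    then obtain v where v: "v \<in> dual_code n C" "e = restr S v" by (auto simp: W_def)
    have lv: "length v = n" using v by (simp add: dual_code_def)
    have "{i\<in>S. v ! i} = {j}"
    proof -
      have "\<And>i. i \<in> S \<Longrightarrow> v ! i = (i = j)"
      proof -
        fix i assume i: "i \<in> S"
        then have "i < n" using S by auto
        then have "e ! i = restr S v ! i" using v by simp
        then show "v ! i = (i = j)" using \<open>i < n\<close> i lv by (simp add: e_def)
      qed
      then show ?thesis using S(2) by auto
    qed
    then show False using nex v by blast
  qed
  obtain y where y: "length y = n" "\<forall>w\<in>W. \<not> ip w y" "ip e y"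
    using sep[OF Wl Wz Wa le eW] by blast
  define x where "x = restr S y"
  have lx: "length x = n" using y by (simp add: x_def)
  have xo: "\<forall>v\<in>dual_code n C. \<not> ip x v"
  proof
    fix v assume v: "v \<in> dual_code n C"
    have lv: "length v = n" using v by (simp add: dual_code_def)
    have "ip x v = ip y (restr S v)" unfolding x_def using ip_restr lv y(1) by simp
    also have "\<dots> = ip (restr S v) y" by (rule ip_sym)
    also have "\<not> \<dots>" using y(2) v by (auto simp: W_def)
    finally show "\<not> ip x v" .
  qed
  have xC: "x \<in> C"
  proof (rule ccontr)
    assume "x \<notin> C"
    from sep[OF Cl Cz Ca lx this] obtain v where v: "length v = n" "\<forall>u\<in>C. \<not> ip u v" "ip x v" by blast
    have "v \<in> dual_code n C" unfolding dual_code_def using v Cl by (auto simp: inner_ip subset_iff)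
    then show False using xo v by blast
  qed
  have yj: "y ! j"
  proof (rule ccontr)
    assume nyj: "\<not> y ! j"
    have "{i. i < length e \<and> e ! i \<and> y ! i} = {}" using nyj by (auto simp: e_def)
    then have "\<not> inner_gf2 e y" unfolding inner_gf2_def by (metis card.empty even_zero)
    then show False using y(3) le y(1) by (simp add: inner_ip)
  qed
  have "x ! j" using yj jn y(1) S(2) by (simp add: x_def)
  then have xnz: "True \<in> set x" using jn lx by (metis nth_mem)
  have "weight x \<le> card S"
    unfolding weight_def using fS by (intro card_mono) (auto simp: x_def y(1))
  moreover have "min_dist C \<le> weight x"
    using min_dist_props[OF Cl] xC xnz by blast
  ultimately show False using S(3) by simp
qed

lemma exists_H:
  assumes lin: "linear_code n C" and nz: "\<exists>u\<in>C. True \<in> set u"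
  shows "\<exists>H. parity_check n C H \<and> stopping_distance n H = min_dist C"
proof -
  have "finite (dual_code n C)"
    using finite_len[of n] by (rule finite_subset[rotated]) (auto simp: dual_code_def)
  then obtain H where H: "set H = dual_code n C" using finite_list by blast
  have pc: "parity_check n C H"
    unfolding parity_check_def
  proof
    show "\<forall>h\<in>set H. length h = n" using H by (auto simp: dual_code_def)
    show "row_span n H = dual_code n C"
    proof
      show "row_span n H \<subseteq> dual_code n C"
      proof
        fix v assume "v \<in> row_span n H"
        then show "v \<in> dual_code n C"
          by (induction rule: row_span.induct) (use H dual_zero[OF lin] dual_add[OF lin] in auto)
      qed
      show "dual_code n C \<subseteq> row_span n H"
      proof
        fix v assume v: "v \<in> dual_code n C"
        then have "vec_add v (zero_vec n) \<in> row_span n H" using H by (auto intro: row_span.intros)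
        then show "v \<in> row_span n H" using v vec_add_zero2 by (auto simp: dual_code_def)
      qed
    qed
  qed
  have "stopping_ok n H (min_dist C)"
    unfolding stopping_ok_def
  proof (intro allI impI)
    fix S assume S: "S \<subseteq> {..<n} \<and> S \<noteq> {} \<and> card S < min_dist C"
    then obtain j where "j \<in> S" by blast
    then obtain v where "v \<in> dual_code n C" "{i\<in>S. v ! i} = {j}" using stop_full[OF lin] S by blast
    then show "\<exists>h\<in>set H. card {i \<in> S. h ! i} = 1" using H by (intro bexI[of _ v]) auto
  qed
  then show ?thesis using sd_eq[OF pc lin nz] pc by blast
qed



lemma C3_linear:
  assumes "linear_code n1 C1" "linear_code n2 C2" "C3 = {u @ v | u v. u \<in> C1 \<and> v \<in> C2}"
  shows "linear_code (n1 + n2) C3"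
  unfolding linear_code_def
proof (intro conjI ballI)
  show "C3 \<subseteq> {u. length u = n1 + n2}" using assms by (auto simp: linear_code_def subset_iff)
  show "zero_vec (n1 + n2) \<in> C3" using assms by (auto simp: linear_code_def zero_append)
  fix a b assume "a \<in> C3" "b \<in> C3"
  then obtain u v u' v' where "a = u @ v" "b = u' @ v'" "u \<in> C1" "v \<in> C2" "u' \<in> C1" "v' \<in> C2"
    using assms(3) by blast
  moreover have "length u = length u'" using calculation assms(1) by (auto simp: linear_code_def)
  moreover have "vec_add u u' \<in> C1" "vec_add v v' \<in> C2" using calculation assms(1,2) by (auto simp: linear_code_def)
  ultimately show "vec_add a b \<in> C3" using assms(3) by (auto simp: vec_add_append)
qed

lemma C3_card:
  assumes "linear_code n1 C1" "C3 = {u @ v | u v. u \<in> C1 \<and> v \<in> C2}"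
  shows "card C3 = card C1 * card C2"
proof -
  have "C3 = (\<lambda>(u,v). u @ v) ` (C1 \<times> C2)" using assms(2) by auto
  moreover have "inj_on (\<lambda>(u,v). u @ v) (C1 \<times> C2)"
  proof (rule inj_onI, clarsimp)
    fix u v u' v' assume "u \<in> C1" "u' \<in> C1" "u @ v = u' @ v'"
    moreover have "length u = length u'" using calculation assms(1) by (auto simp: linear_code_def)
    ultimately show "u = u' \<and> v = v'" by simp
  qed
  ultimately show ?thesis by (simp add: card_image card_cartesian_product)
qed

lemma C3_mindist:
  assumes l1: "linear_code n1 C1" and l2: "linear_code n2 C2"
    and z1: "\<exists>u\<in>C1. True \<in> set u" and z2: "\<exists>u\<in>C2. True \<in> set u"
    and C3: "C3 = {u @ v | u v. u \<in> C1 \<and> v \<in> C2}"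
  shows "min_dist C3 = min (min_dist C1) (min_dist C2)"
proof -
  have Cl1: "C1 \<subseteq> {u. length u = n1}" and Cl2: "C2 \<subseteq> {u. length u = n2}"
    and Cz1: "zero_vec n1 \<in> C1" and Cz2: "zero_vec n2 \<in> C2"
    using l1 l2 by (auto simp: linear_code_def)
  have Cl3: "C3 \<subseteq> {u. length u = n1 + n2}" using C3 Cl1 Cl2 by (auto simp: subset_iff)
  obtain c1 where c1: "c1 \<in> C1" "True \<in> set c1" "weight c1 = min_dist C1" using min_dist_props[OF Cl1 z1] by blast
  obtain c2 where c2: "c2 \<in> C2" "True \<in> set c2" "weight c2 = min_dist C2" using min_dist_props[OF Cl2 z2] by blast
  have lb: "\<forall>c\<in>C3. True \<in> set c \<longrightarrow> min (min_dist C1) (min_dist C2) \<le> weight c"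
  proof (intro ballI impI)
    fix c assume "c \<in> C3" "True \<in> set c"
    then obtain u v where uv: "c = u @ v" "u \<in> C1" "v \<in> C2" using C3 by blast
    show "min (min_dist C1) (min_dist C2) \<le> weight c"
    proof (cases "True \<in> set u")
      case True
      then have "min_dist C1 \<le> weight u" using min_dist_props[OF Cl1 z1] uv by blast
      then show ?thesis using uv by (simp add: weight_append)
    next
      case False
      then have "True \<in> set v" using \<open>True \<in> set c\<close> uv by auto
      then have "min_dist C2 \<le> weight v" using min_dist_props[OF Cl2 z2] uv by blast
      then show ?thesis using uv by (simp add: weight_append)
    qed
  qed
  show ?thesis
  proof (cases "min_dist C1 \<le> min_dist C2")
    case True
    have "c1 @ zero_vec n2 \<in> C3" using C3 c1 Cz2 by blast
    then show ?thesis using min_dist_eqI[OF Cl3 _ _ _ lb] c1 True by (auto simp: weight_append)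
  next
    case False
    have "zero_vec n1 @ c2 \<in> C3" using C3 c2 Cz1 by blast
    then show ?thesis using min_dist_eqI[OF Cl3 _ _ _ lb] c2 False by (auto simp: weight_append)
  qed
qed

lemma C3_dual:
  assumes l1: "linear_code n1 C1" and l2: "linear_code n2 C2"
    and C3: "C3 = {u @ v | u v. u \<in> C1 \<and> v \<in> C2}"
  shows "dual_code (n1 + n2) C3 = {a @ b | a b. a \<in> dual_code n1 C1 \<and> b \<in> dual_code n2 C2}"
proof -
  have Cl1: "C1 \<subseteq> {u. length u = n1}" and Cl2: "C2 \<subseteq> {u. length u = n2}"
    and Cz1: "zero_vec n1 \<in> C1" and Cz2: "zero_vec n2 \<in> C2"
    using l1 l2 by (auto simp: linear_code_def)
  show ?thesis
  proof (intro set_eqI iffI)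
    fix w assume w: "w \<in> dual_code (n1 + n2) C3"
    define a where "a = take n1 w"
    define b where "b = drop n1 w"
    have lw: "length w = n1 + n2" using w by (simp add: dual_code_def)
    have wab: "w = a @ b" by (simp add: a_def b_def)
    have la: "length a = n1" and lb: "length b = n2" using lw by (auto simp: a_def b_def)
    have o: "\<And>c. c \<in> C3 \<Longrightarrow> \<not> ip c w"
    proof -
      fix c assume c: "c \<in> C3"
      then have "length c = n1 + n2" using Cl1 Cl2 C3 by (auto simp: subset_iff)
      moreover have "\<not> inner_gf2 c w" using w c by (simp add: dual_code_def)
      ultimately show "\<not> ip c w" using lw by (simp add: inner_ip)
    qed
    have "a \<in> dual_code n1 C1"
      unfolding dual_code_def
    proof (intro CollectI conjI ballI la)
      fix u assume u: "u \<in> C1"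
      then have "u @ zero_vec n2 \<in> C3" using C3 Cz2 by blast
      then have "\<not> ip (u @ zero_vec n2) (a @ b)" using o wab by simp
      then show "\<not> inner_gf2 u a" using u Cl1 la by (auto simp: ip_append inner_ip)
    qed
    moreover have "b \<in> dual_code n2 C2"
      unfolding dual_code_def
    proof (intro CollectI conjI ballI lb)
      fix u assume u: "u \<in> C2"
      then have "zero_vec n1 @ u \<in> C3" using C3 Cz1 by blast
      then have "\<not> ip (zero_vec n1 @ u) (a @ b)" using o wab by simp
      then show "\<not> inner_gf2 u b" using u Cl2 la lb by (auto simp: ip_append inner_ip)
    qed
    ultimately show "w \<in> {a @ b | a b. a \<in> dual_code n1 C1 \<and> b \<in> dual_code n2 C2}" using wab by blast
  next
    fix w assume "w \<in> {a @ b | a b. a \<in> dual_code n1 C1 \<and> b \<in> dual_code n2 C2}"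
    then obtain a b where ab: "w = a @ b" "a \<in> dual_code n1 C1" "b \<in> dual_code n2 C2" by blast
    have la: "length a = n1" and lb: "length b = n2" using ab by (auto simp: dual_code_def)
    show "w \<in> dual_code (n1 + n2) C3"
      unfolding dual_code_def
    proof (intro CollectI conjI ballI)
      show "length w = n1 + n2" using ab la lb by simp
      fix c assume "c \<in> C3"
      then obtain u v where uv: "c = u @ v" "u \<in> C1" "v \<in> C2" using C3 by blast
      have "\<not> ip u a" using dual_inner[OF l1 uv(2) ab(2)] .
      moreover have "\<not> ip v b" using dual_inner[OF l2 uv(3) ab(3)] .
      moreover have "length u = n1" "length v = n2" using uv Cl1 Cl2 by auto
      ultimately show "\<not> inner_gf2 c w" using uv ab la lb by (simp add: ip_append inner_ip)
    qed
  qed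
qed



lemma span3:
  assumes L1: "\<forall>h\<in>set H1. length h = n1" and L2: "\<forall>h\<in>set H2. length h = n2"
    and H3: "H3 = map (\<lambda>h. h @ zero_vec n2) H1 @ map (\<lambda>h. zero_vec n1 @ h) H2"
  shows "row_span (n1 + n2) H3 = {a @ b | a b. a \<in> row_span n1 H1 \<and> b \<in> row_span n2 H2}"
proof (intro set_eqI iffI)
  fix w assume "w \<in> row_span (n1 + n2) H3"
  then show "w \<in> {a @ b | a b. a \<in> row_span n1 H1 \<and> b \<in> row_span n2 H2}"
  proof (induction rule: row_span.induct)
    case zero
    then show ?case by (auto simp: zero_append intro: row_span.zero)
  next
    case (add r v)
    then obtain a b where ab: "v = a @ b" "a \<in> row_span n1 H1" "b \<in> row_span n2 H2" by blast
    have la: "length a = n1" using row_span_len[OF L1 ab(2)] .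
    have lb: "length b = n2" using row_span_len[OF L2 ab(3)] .
    from add(1) H3 consider (A) h where "h \<in> set H1" "r = h @ zero_vec n2"
      | (B) h where "h \<in> set H2" "r = zero_vec n1 @ h" by auto
    then show ?case
    proof cases
      case A
      then have "vec_add r v = vec_add h a @ b" using ab la lb L1 by (simp add: vec_add_append vec_add_zero)
      moreover have "vec_add h a \<in> row_span n1 H1" using A ab by (auto intro: row_span.add)
      ultimately show ?thesis using ab by blast
    next
      case B
      then have "vec_add r v = a @ vec_add h b" using ab la lb L2 by (simp add: vec_add_append vec_add_zero)
      moreover have "vec_add h b \<in> row_span n2 H2" using B ab by (auto intro: row_span.add)
      ultimately show ?thesis using ab by blast
    qed
  qed
next
  fix w assume "w \<in> {a @ b | a b. a \<in> row_span n1 H1 \<and> b \<in> row_span n2 H2}"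
  then obtain a b where ab: "w = a @ b" "a \<in> row_span n1 H1" "b \<in> row_span n2 H2" by blast
  have zb: "zero_vec n1 @ b \<in> row_span (n1 + n2) H3" if "b \<in> row_span n2 H2" for b
    using that
  proof (induction rule: row_span.induct)
    case zero then show ?case by (simp add: zero_append[symmetric] row_span.zero)
  next
    case (add r v)
    have lv: "length v = n2" using row_span_len[OF L2 add(2)] .
    have "zero_vec n1 @ r \<in> set H3" using add(1) H3 by auto
    from row_span.add[OF this add(3)] show ?case
      using lv L2 add(1) by (simp add: vec_add_append vec_add_zero)
  qed
  have "\<forall>b\<in>row_span n2 H2. a @ b \<in> row_span (n1 + n2) H3" using ab(2)
  proof (induction rule: row_span.induct)
    case zero then show ?case using zb by blast
  next
    case (add r v)
    show ?case
    proof
      fix b assume b: "b \<in> row_span n2 H2"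
      have lv: "length v = n1" using row_span_len[OF L1 add(2)] .
      have lb: "length b = n2" using row_span_len[OF L2 b] .
      have "r @ zero_vec n2 \<in> set H3" using add(1) H3 by auto
      from row_span.add[OF this] add(3) b have "vec_add (r @ zero_vec n2) (v @ b) \<in> row_span (n1 + n2) H3" by blast
      then show "vec_add r v @ b \<in> row_span (n1 + n2) H3"
        using lv lb L1 add(1) by (simp add: vec_add_append vec_add_zero)
    qed
  qed
  then show "w \<in> row_span (n1 + n2) H3" using ab by blast
qed

lemma stop3:
  assumes L1: "\<forall>h\<in>set H1. length h = n1" and L2: "\<forall>h\<in>set H2. length h = n2"
    and H3: "H3 = map (\<lambda>h. h @ zero_vec n2) H1 @ map (\<lambda>h. zero_vec n1 @ h) H2"
    and s1: "stopping_ok n1 H1 d1" and s2: "stopping_ok n2 H2 d2"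
  shows "stopping_ok (n1 + n2) H3 (min d1 d2)"
  unfolding stopping_ok_def
proof (intro allI impI)
  fix S assume S: "S \<subseteq> {..<n1 + n2} \<and> S \<noteq> {} \<and> card S < min d1 d2"
  have fS: "finite S" using S finite_subset by blast
  define S1 where "S1 = S \<inter> {..<n1}"
  define S2 where "S2 = (\<lambda>i. i - n1) ` (S - {..<n1})"
  show "\<exists>h\<in>set H3. card {i \<in> S. h ! i} = 1"
  proof (cases "S1 = {}")
    case False
    have "card S1 \<le> card S" unfolding S1_def using fS by (intro card_mono) auto
    then have "S1 \<subseteq> {..<n1} \<and> S1 \<noteq> {} \<and> card S1 < d1" using S False by (auto simp: S1_def)
    then obtain h where h: "h \<in> set H1" "card {i \<in> S1. h ! i} = 1" using s1 unfolding stopping_ok_def by blast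
    have lh: "length h = n1" using h L1 by auto
    have "{i \<in> S. (h @ zero_vec n2) ! i} = {i \<in> S1. h ! i}"
    proof -
      have "\<And>i. i \<in> S \<Longrightarrow> (h @ zero_vec n2) ! i = (i < n1 \<and> h ! i)"
      proof -
        fix i assume "i \<in> S"
        then have "i < n1 + n2" using S by auto
        then show "(h @ zero_vec n2) ! i = (i < n1 \<and> h ! i)" using lh by (auto simp: nth_append zero_vec_def)
      qed
      then show ?thesis by (auto simp: S1_def)
    qed
    then show ?thesis using h H3 by (intro bexI[of _ "h @ zero_vec n2"]) auto
  next
    case True
    have "card S2 \<le> card S" unfolding S2_def using fS
      by (meson Diff_subset card_image_le card_mono finite_Diff le_trans)
    moreover have "S2 \<subseteq> {..<n2}" using S by (auto simp: S2_def)
    moreover have "S2 \<noteq> {}" using S True by (auto simp: S1_def S2_def)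
    ultimately have "S2 \<subseteq> {..<n2} \<and> S2 \<noteq> {} \<and> card S2 < d2" using S by auto
    then obtain h where h: "h \<in> set H2" "card {i \<in> S2. h ! i} = 1" using s2 unfolding stopping_ok_def by blast
    have Sge: "\<And>i. i \<in> S \<Longrightarrow> n1 \<le> i" using True by (auto simp: S1_def)
    have "{i \<in> S2. h ! i} = (\<lambda>i. i - n1) ` {i \<in> S. (zero_vec n1 @ h) ! i}"
      using Sge by (auto simp: S2_def nth_append zero_vec_def image_iff)
    moreover have "inj_on (\<lambda>i. i - n1) {i \<in> S. (zero_vec n1 @ h) ! i}"
    proof (rule inj_onI)
      fix x y assume "x \<in> {i \<in> S. (zero_vec n1 @ h) ! i}" "y \<in> {i \<in> S. (zero_vec n1 @ h) ! i}" "x - n1 = y - n1"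
      then have "n1 \<le> x" "n1 \<le> y" "x - n1 = y - n1" using Sge by auto
      then show "x = y" by arith
    qed
    ultimately have "card {i \<in> S. (zero_vec n1 @ h) ! i} = 1" using h(2) by (simp add: card_image)
    then show ?thesis using h H3 by (intro bexI[of _ "zero_vec n1 @ h"]) auto
  qed
qed



theorem theorem7:
  assumes "is_code n1 k1 d1 C1" and "is_code n2 k2 d2 C2"
    and "C3 = {u @ v | u v. u \<in> C1 \<and> v \<in> C2}"
  shows "is_code (n1 + n2) (k1 + k2) (min d1 d2) C3
    \<and> stopping_redundancy (n1 + n2) C3 \<le> stopping_redundancy n1 C1 + stopping_redundancy n2 C2"
proof -
  have l1: "linear_code n1 C1" and c1: "card C1 = 2 ^ k1" and z1: "\<exists>u\<in>C1. True \<in> set u" and d1: "d1 = min_dist C1"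
    using assms(1) by (auto simp: is_code_def)
  have l2: "linear_code n2 C2" and c2: "card C2 = 2 ^ k2" and z2: "\<exists>u\<in>C2. True \<in> set u" and d2: "d2 = min_dist C2"
    using assms(2) by (auto simp: is_code_def)
  have l3: "linear_code (n1 + n2) C3" using C3_linear[OF l1 l2 assms(3)] .
  have c3: "card C3 = 2 ^ (k1 + k2)" using C3_card[OF l1 assms(3)] c1 c2 by (simp add: power_add)
  have z3: "\<exists>u\<in>C3. True \<in> set u"
  proof -
    obtain u where "u \<in> C1" "True \<in> set u" using z1 by blast
    moreover have "zero_vec n2 \<in> C2" using l2 by (simp add: linear_code_def)
    ultimately have "u @ zero_vec n2 \<in> C3" "True \<in> set (u @ zero_vec n2)" using assms(3) by auto
    then show ?thesis by blast
  qed
  have d3: "min_dist C3 = min d1 d2" using C3_mindist[OF l1 l2 z1 z2 assms(3)] d1 d2 by simp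
  have part1: "is_code (n1 + n2) (k1 + k2) (min d1 d2) C3"
    unfolding is_code_def using l3 c3 z3 d3 by simp
  define P1 where "P1 = (\<lambda>m. \<exists>H. length H = m \<and> parity_check n1 C1 H \<and> stopping_distance n1 H = min_dist C1)"
  define P2 where "P2 = (\<lambda>m. \<exists>H. length H = m \<and> parity_check n2 C2 H \<and> stopping_distance n2 H = min_dist C2)"
  have "\<exists>m. P1 m" using exists_H[OF l1 z1] unfolding P1_def by blast
  then have "P1 (Least P1)" by (rule LeastI_ex)
  then obtain H1 where H1: "length H1 = stopping_redundancy n1 C1" "parity_check n1 C1 H1" "stopping_distance n1 H1 = min_dist C1"
    unfolding P1_def stopping_redundancy_def by blast
  have "\<exists>m. P2 m" using exists_H[OF l2 z2] unfolding P2_def by blast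
  then have "P2 (Least P2)" by (rule LeastI_ex)
  then obtain H2 where H2: "length H2 = stopping_redundancy n2 C2" "parity_check n2 C2 H2" "stopping_distance n2 H2 = min_dist C2"
    unfolding P2_def stopping_redundancy_def by blast
  define H3 where "H3 = map (\<lambda>h. h @ zero_vec n2) H1 @ map (\<lambda>h. zero_vec n1 @ h) H2"
  have L1: "\<forall>h\<in>set H1. length h = n1" using H1(2) by (simp add: parity_check_def)
  have L2: "\<forall>h\<in>set H2. length h = n2" using H2(2) by (simp add: parity_check_def)
  have pc3: "parity_check (n1 + n2) C3 H3"
    unfolding parity_check_def
  proof
    show "\<forall>h\<in>set H3. length h = n1 + n2" using L1 L2 by (auto simp: H3_def)
    show "row_span (n1 + n2) H3 = dual_code (n1 + n2) C3"
      using span3[OF L1 L2 H3_def] C3_dual[OF l1 l2 assms(3)] H1(2) H2(2)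
      by (simp add: parity_check_def)
  qed
  have s1: "stopping_ok n1 H1 d1" using sd_ok[OF H1(2) l1 z1] H1(3) d1 by simp
  have s2: "stopping_ok n2 H2 d2" using sd_ok[OF H2(2) l2 z2] H2(3) d2 by simp
  have s3: "stopping_ok (n1 + n2) H3 (min_dist C3)" using stop3[OF L1 L2 H3_def s1 s2] d3 by simp
  have sd3: "stopping_distance (n1 + n2) H3 = min_dist C3" using sd_eq[OF pc3 l3 z3 s3] .
  have lH3: "length H3 = stopping_redundancy n1 C1 + stopping_redundancy n2 C2"
    using H1(1) H2(1) by (simp add: H3_def)
  have "stopping_redundancy (n1 + n2) C3 \<le> length H3"
    unfolding stopping_redundancy_def using pc3 sd3 by (intro Least_le) blast
  then show ?thesis using part1 lH3 by simp
qed

end
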